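(* Let $(X,d)$ be a compact metric space and let $f\colon X\to X$ be a continuous map with the limit shadowing property. Then $CR(f)=\Omega(f)=\overline{M(f)}$, and the restriction $f|_{\Omega(f)}\colon\Omega(f)\to\Omega(f)$ has the shadowing property.
   Context: A sequence $(x_i)_{i\ge0}$ in $X$ is a $\delta$-pseudo orbit of $f$ if $d(f(x_i),x_{i+1})\le\delta$ for all $i\ge0$; it is $\epsilon$-shadowed by $x\in X$ if $d(x_i,f^i(x))\le\epsilon$ for all $i\ge0$. $f$ has the shadowing property if for every $\epsilon>0$ there is $\delta>0$ such that every $\delta$-pseudo orbit of $f$ is $\epsilon$-shadowed by some point of $X$. A sequence $(x_i)_{i\ge0}$ is a limit pseudo orbit of $f$ if $\lim_{i\to\infty}d(f(x_i),x_{i+1})=0$; $f$ has the limit shadowing property if for every limit pseudo orbit $(x_i)_{i\ge0}$ there is $y\in X$ with $\lim_{i\to\infty}d(x_i,f^i(y))=0$. A finite sequence $(x_i)_{i=0}^k$ ($k\ge1$) is a $\delta$-chain if $d(f(x_i),x_{i+1})\le\delta$ for $0\le i\le k-1$, and a $\delta$-cycle if moreover $x_0=x_k$. $x$ is chain recurrent if for every $\delta>0$ there is a $\delta$-cycle with $x_0=x_k=x$; $CR(f)$ is the set of chain recurrent points. $x$ is minimal if $f$ restricted to the orbit closure $\overline{\{f^n(x):n\ge0\}}$ is minimal; $M(f)$ is the set of minimal points. $x$ is non-wandering if for every neighborhood $U$ of $x$ there is $n>0$ with $f^n(U)\cap U\ne\emptyset$; $\Omega(f)$ is the set of non-wandering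 points. *)

theory Defs
  imports "HOL-Analysis.Analysis"
begin

definition pseudo_orbit :: "('a::metric_space \<Rightarrow> 'a) \<Rightarrow> 'a set \<Rightarrow> real \<Rightarrow> (nat \<Rightarrow> 'a) \<Rightarrow> bool" where
  "pseudo_orbit f X \<delta> xs \<longleftrightarrow> (\<forall>i. xs i \<in> X) \<and> (\<forall>i. dist (f (xs i)) (xs (Suc i)) \<le> \<delta>)"

definition shadows :: "('a::metric_space \<Rightarrow> 'a) \<Rightarrow> real \<Rightarrow> (nat \<Rightarrow> 'a) \<Rightarrow> 'a \<Rightarrow> bool" where
  "shadows f \<epsilon> xs x \<longleftrightarrow> (\<forall>i. dist (xs i) ((f ^^ i) x) \<le> \<epsilon>)"

definition shadowing_property :: "('a::metric_space \<Rightarrow> 'a) \<Rightarrow> 'a set \<Rightarrow> bool" where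
  "shadowing_property f X \<longleftrightarrow>
     (\<forall>\<epsilon>>0. \<exists>\<delta>>0. \<forall>xs. pseudo_orbit f X \<delta> xs \<longrightarrow> (\<exists>x\<in>X. shadows f \<epsilon> xs x))"

definition limit_pseudo_orbit :: "('a::metric_space \<Rightarrow> 'a) \<Rightarrow> 'a set \<Rightarrow> (nat \<Rightarrow> 'a) \<Rightarrow> bool" where
  "limit_pseudo_orbit f X xs \<longleftrightarrow>
     (\<forall>i. xs i \<in> X) \<and> (\<lambda>i. dist (f (xs i)) (xs (Suc i))) \<longlonglongrightarrow> 0"

definition limit_shadowing_property :: "('a::metric_space \<Rightarrow> 'a) \<Rightarrow> 'a set \<Rightarrow> bool" where
  "limit_shadowing_property f X \<longleftrightarrow>
     (\<forall>xs. limit_pseudo_orbit f X xs \<longrightarrow>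
        (\<exists>y\<in>X. (\<lambda>i. dist (xs i) ((f ^^ i) y)) \<longlonglongrightarrow> 0))"

definition chain_recurrent_set :: "('a::metric_space \<Rightarrow> 'a) \<Rightarrow> 'a set \<Rightarrow> 'a set" where
  "chain_recurrent_set f X = {x \<in> X. \<forall>\<delta>>0. \<exists>k::nat. k \<ge> 1 \<and> (\<exists>xs. xs 0 = x \<and> xs k = x \<and>
       (\<forall>i\<le>k. xs i \<in> X) \<and> (\<forall>i<k. dist (f (xs i)) (xs (Suc i)) \<le> \<delta>))}"

definition orbit_closure :: "('a::metric_space \<Rightarrow> 'a) \<Rightarrow> 'a \<Rightarrow> 'a set" where
  "orbit_closure f x = closure {(f ^^ n) x | n. True}"

definition minimal_system :: "('a::metric_space \<Rightarrow> 'a) \<Rightarrow> 'a set \<Rightarrow> bool" where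
  "minimal_system f Y \<longleftrightarrow> Y \<noteq> {} \<and> closed Y \<and> f ` Y \<subseteq> Y \<and>
     (\<forall>Z. Z \<subseteq> Y \<and> Z \<noteq> {} \<and> closed Z \<and> f ` Z \<subseteq> Z \<longrightarrow> Z = Y)"

definition minimal_points :: "('a::metric_space \<Rightarrow> 'a) \<Rightarrow> 'a set \<Rightarrow> 'a set" where
  "minimal_points f X = {x \<in> X. minimal_system f (orbit_closure f x)}"

definition nonwandering_set :: "('a::metric_space \<Rightarrow> 'a) \<Rightarrow> 'a set \<Rightarrow> 'a set" where
  "nonwandering_set f X = {x \<in> X. \<forall>U. openin (top_of_set X) U \<and> x \<in> U \<longrightarrow>
       (\<exists>n>0. (f ^^ n) ` U \<inter> U \<noteq> {})}"

end

theory Submission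
  imports Defs
begin


locale dyn =
  fixes f :: "'a::metric_space \<Rightarrow> 'a" and X :: "'a set"
  assumes cX: "compact X" and cf: "continuous_on X f" and fX: "f ` X \<subseteq> X"
begin

abbreviation "\<Omega> \<equiv> nonwandering_set f X"

lemma closedX: "closed X" using cX compact_imp_closed by blast

lemma funpow_X: "x \<in> X \<Longrightarrow> (f ^^ n) x \<in> X"
  by (induction n) (use fX in auto)

lemma cont_funpow: "continuous_on X (f ^^ n)"
proof (induction n)
  case 0 then show ?case by (simp add: continuous_on_id)
next
  case (Suc n)
  have "continuous_on X (f \<circ> (f ^^ n))"
    by (rule continuous_on_compose[OF Suc]) (use cf funpow_X continuous_on_subset in blast)
  then show ?case by simp
qed

lemma unif: "e > 0 \<Longrightarrow> \<exists>r>0. \<forall>a\<in>X. \<forall>b\<in>X. dist a b < r \<longrightarrow> dist (f a) (f b) < e"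
  using compact_uniformly_continuous[OF cf cX] unfolding uniformly_continuous_on_def
  by (metis dist_commute)

lemma trace:
  assumes "\<forall>a\<in>X. \<forall>b\<in>X. dist a b < r \<longrightarrow> dist (f a) (f b) < d/2" "r \<le> d/2" "u \<in> X"
    "\<forall>i\<le>L. c i \<in> X \<and> dist (c i) ((f^^i) u) < r"
  shows "\<forall>i<L. dist (f (c i)) (c (Suc i)) \<le> d"
proof (intro allI impI)
  fix i assume i: "i < L"
  have a: "c i \<in> X" "dist (c i) ((f^^i) u) < r" using assms(4) i by auto
  have b: "c (Suc i) \<in> X" "dist (c (Suc i)) ((f^^Suc i) u) < r" using assms(4) i Suc_leI by blast+
  have "dist (f (c i)) (f ((f^^i) u)) < d/2" using assms(1) a funpow_X[OF assms(3)] by blast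
  then have "dist (f (c i)) ((f^^Suc i) u) < d/2" by simp
  then show "dist (f (c i)) (c (Suc i)) \<le> d"
    using b(2) assms(2) dist_triangle[of "f (c i)" "c (Suc i)" "(f^^Suc i) u"] dist_commute[of "c (Suc i)" "(f^^Suc i) u"]
    by linarith
qed

lemma omega_sub_CR: "\<Omega> \<subseteq> chain_recurrent_set f X"
proof
  fix x assume x: "x \<in> \<Omega>"
  then have xX: "x \<in> X" by (simp add: nonwandering_set_def)
  show "x \<in> chain_recurrent_set f X"
    unfolding chain_recurrent_set_def
  proof (intro CollectI conjI allI impI xX)
    fix d :: real assume d: "d > 0"
    obtain r0 where r0: "r0 > 0" "\<forall>a\<in>X. \<forall>b\<in>X. dist a b < r0 \<longrightarrow> dist (f a) (f b) < d/2"
      using unif[of "d/2"] d by auto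
    define r where "r = min r0 (d/2)"
    have r: "r > 0" "r \<le> d/2" "r \<le> r0" using r0 d by (auto simp: r_def)
    have "openin (top_of_set X) (ball x r \<inter> X)" using openin_open_Int[of "ball x r" X] by (simp add: Int_commute)
    moreover have "x \<in> ball x r \<inter> X" using r xX by auto
    ultimately obtain n where n: "n > 0" "(f^^n) ` (ball x r \<inter> X) \<inter> (ball x r \<inter> X) \<noteq> {}"
      using x unfolding nonwandering_set_def by blast
    then obtain u where u: "u \<in> X" "dist x u < r" "dist x ((f^^n) u) < r" by auto
    define c where "c i = (if i = 0 \<or> i = n then x else (f^^i) u)" for i
    have cc: "\<forall>i\<le>n. c i \<in> X \<and> dist (c i) ((f^^i) u) < r"
      using u r funpow_X[OF u(1)] xX by (auto simp: c_def)
    have "\<forall>i<n. dist (f (c i)) (c (Suc i)) \<le> d"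
      by (rule trace[OF _ r(2) u(1) cc]) (use r0 r in force)
    then show "\<exists>k\<ge>1. \<exists>xs. xs 0 = x \<and> xs k = x \<and> (\<forall>i\<le>k. xs i \<in> X) \<and> (\<forall>i<k. dist (f (xs i)) (xs (Suc i)) \<le> d)"
      using cc n(1) by (intro exI[of _ n] conjI exI[of _ c]) (auto simp: c_def)
  qed
qed

lemma closure_sub_omega: assumes "S \<subseteq> \<Omega>" shows "closure S \<subseteq> \<Omega>"
proof
  fix x assume x: "x \<in> closure S"
  have SX: "S \<subseteq> X" using assms by (auto simp: nonwandering_set_def)
  then have xX: "x \<in> X" using x closedX closure_minimal by blast
  show "x \<in> \<Omega>" unfolding nonwandering_set_def
  proof (intro CollectI conjI allI impI xX)
    fix U assume U: "openin (top_of_set X) U \<and> x \<in> U"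
    then obtain T where T: "open T" "U = T \<inter> X" by (auto simp: openin_open)
    then obtain s where s: "s \<in> S" "s \<in> T" using x U closure_iff_nhds_not_empty by blast
    then have "s \<in> U" using T SX by auto
    then show "\<exists>n>0. (f ^^ n) ` U \<inter> U \<noteq> {}" using assms s U unfolding nonwandering_set_def by blast
  qed
qed

lemma omega_closed: "closed \<Omega>"
  using closure_sub_omega[of \<Omega>] closure_subset[of \<Omega>] closed_closure[of \<Omega>] by (metis subset_antisym order_refl)

lemma omega_X: "\<Omega> \<subseteq> X" by (auto simp: nonwandering_set_def)

lemma omega_compact: "compact \<Omega>"
  using omega_closed omega_X cX compact_Int_closed by (metis inf.absorb_iff2)

end


context dyn begin

lemma orbit_inv: "f ` {(f^^n) x | n. True} \<subseteq> {(f^^n) x | n. True}"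
proof
  fix z assume "z \<in> f ` {(f^^n) x | n. True}"
  then obtain n where "z = f ((f^^n) x)" by auto
  then have "z = (f^^Suc n) x" by simp
  then show "z \<in> {(f^^n) x | n. True}" by blast
qed

lemma closure_inv:
  assumes "A \<subseteq> X" "f ` A \<subseteq> A" shows "f ` closure A \<subseteq> closure A"
proof -
  have "closure A \<subseteq> X" using assms closedX closure_minimal by blast
  then show ?thesis using image_closure_subset[of A f "closure A"] assms(2) cf continuous_on_subset closure_subset
    by (metis closed_closure subset_trans)
qed

lemma orbit_X: "x \<in> X \<Longrightarrow> {(f^^n) x | n. True} \<subseteq> X" using funpow_X by auto

lemma minimal_sub_omega: "minimal_points f X \<subseteq> \<Omega>"
proof
  fix m assume m: "m \<in> minimal_points f X"
  then have mX: "m \<in> X" and ms: "minimal_system f (orbit_closure f m)" by (auto simp: minimal_points_def)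
  define A where "A = {(f^^n) (f m) | n. True}"
  have AX: "A \<subseteq> X" unfolding A_def using orbit_X fX mX by blast
  have Asub: "A \<subseteq> {(f^^n) m | n. True}"
  proof
    fix z assume "z \<in> A" then obtain n where "z = (f^^n) (f m)" by (auto simp: A_def)
    then have "z = (f^^Suc n) m" by (simp add: funpow_Suc_right del: funpow.simps)
    then show "z \<in> {(f^^n) m | n. True}" by blast
  qed
  have "closure A = orbit_closure f m"
  proof -
    have "closure A \<subseteq> orbit_closure f m" using Asub closure_mono unfolding orbit_closure_def by blast
    moreover have "closure A \<noteq> {}" unfolding A_def by auto
    moreover have "f ` closure A \<subseteq> closure A" using closure_inv[OF AX] orbit_inv A_def by blast
    ultimately show ?thesis using ms unfolding minimal_system_def by blast
  qed
  moreover have "m \<in> orbit_closure f m" unfolding orbit_closure_def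
    by (rule closure_subset[THEN subsetD]) (metis (mono_tags) CollectI funpow_0)
  ultimately have mA: "m \<in> closure A" by simp
  show "m \<in> \<Omega>" unfolding nonwandering_set_def
  proof (intro CollectI conjI allI impI mX)
    fix U assume U: "openin (top_of_set X) U \<and> m \<in> U"
    then obtain T where T: "open T" "U = T \<inter> X" by (auto simp: openin_open)
    then obtain a where a: "a \<in> A" "a \<in> T" using mA U closure_iff_nhds_not_empty by blast
    then obtain n where an: "a = (f^^Suc n) m" unfolding A_def by (auto simp: funpow_Suc_right simp del: funpow.simps)
    have "a \<in> U" using a T AX by auto
    then have "a \<in> (f^^Suc n) ` U \<inter> U" using an U by auto
    then show "\<exists>n>0. (f ^^ n) ` U \<inter> U \<noteq> {}" by blast
  qed
qed

definition omg :: "'a \<Rightarrow> 'a set" where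
  "omg y = {z. \<forall>r>0. \<forall>N. \<exists>n\<ge>N. dist ((f^^n) y) z < r}"

lemma omg_X: assumes "y \<in> X" shows "omg y \<subseteq> X"
proof
  fix z assume "z \<in> omg y"
  then have "\<forall>e>0. \<exists>p\<in>X. dist p z < e" unfolding omg_def using funpow_X[OF assms] by blast
  then show "z \<in> X" using closure_approachable closedX closure_closed by metis
qed

lemma omg_omega: assumes "y \<in> X" shows "omg y \<subseteq> \<Omega>"
proof
  fix z assume z: "z \<in> omg y"
  have zX: "z \<in> X" using omg_X assms z by blast
  show "z \<in> \<Omega>" unfolding nonwandering_set_def
  proof (intro CollectI conjI allI impI zX)
    fix U assume U: "openin (top_of_set X) U \<and> z \<in> U"
    then obtain r where r: "r > 0" "ball z r \<inter> X \<subseteq> U" using openin_contains_ball by metis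
    obtain n1 where n1: "dist ((f^^n1) y) z < r" using z r unfolding omg_def by blast
    obtain n2 where n2: "n2 \<ge> Suc n1" "dist ((f^^n2) y) z < r" using z r unfolding omg_def by blast
    have u: "(f^^n1) y \<in> U" using n1 r funpow_X[OF assms] by (auto simp: dist_commute)
    have "(f^^n2) y \<in> U" using n2 r funpow_X[OF assms] by (auto simp: dist_commute)
    moreover have "(f^^n2) y = (f^^(n2-n1)) ((f^^n1) y)"
      using n2(1) by (metis funpow_add o_apply le_add_diff_inverse2 Suc_leD)
    ultimately have "(f^^n2) y \<in> (f^^(n2-n1)) ` U \<inter> U" using u by auto
    then show "\<exists>n>0. (f ^^ n) ` U \<inter> U \<noteq> {}" using n2(1) by (intro exI[of _ "n2-n1"]) auto
  qed
qed

lemma seqc: "seq_compact X" using cX compact_imp_seq_compact by blast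

lemma omg_near:
  assumes y: "y \<in> X" and g: "g > 0"
  shows "\<exists>N. \<forall>n\<ge>N. \<exists>w\<in>omg y. dist ((f^^n) y) w < g"
proof (rule ccontr)
  assume "\<not> ?thesis"
  then have "\<forall>N. \<exists>n\<ge>N. \<forall>w\<in>omg y. dist ((f^^n) y) w \<ge> g" by (auto simp: not_less)
  then obtain h where h: "\<And>N. h N \<ge> N" "\<And>N. \<forall>w\<in>omg y. dist ((f^^h N) y) w \<ge> g" by metis
  obtain l r where lr: "l \<in> X" "strict_mono r" "((\<lambda>N. (f^^h N) y) \<circ> r) \<longlonglongrightarrow> l"
    using seq_compactE[OF seqc, of "\<lambda>N. (f^^h N) y"] funpow_X[OF y] by blast
  have ev: "\<forall>rr>0. \<exists>M. \<forall>m\<ge>M. dist ((f^^h (r m)) y) l < rr"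
    using lr(3) unfolding lim_sequentially by (simp add: o_def)
  have "l \<in> omg y" unfolding omg_def
  proof (intro CollectI allI impI)
    fix rr :: real and N assume "rr > 0"
    then obtain M where M: "\<forall>m\<ge>M. dist ((f^^h (r m)) y) l < rr" using ev by blast
    have "h (r (M+N)) \<ge> N" using h(1)[of "r (M+N)"] seq_suble[OF lr(2), of "M+N"] by linarith
    then show "\<exists>n\<ge>N. dist ((f ^^ n) y) l < rr" using M by fastforce
  qed
  moreover obtain M where "\<forall>m\<ge>M. dist ((f^^h (r m)) y) l < g" using ev g by blast
  ultimately show False using h(2) by (meson order.refl not_le)
qed

lemma omg_cycle:
  assumes y: "y \<in> X" and x: "x \<in> omg y" and d: "d > 0"
  shows "\<exists>L\<ge>2. \<exists>c. c 0 = x \<and> c L = x \<and> (\<forall>i\<le>L. c i \<in> omg y) \<and> (\<forall>i<L. dist (f (c i)) (c (Suc i)) \<le> d)"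
proof -
  obtain r0 where r0: "r0 > 0" "\<forall>a\<in>X. \<forall>b\<in>X. dist a b < r0 \<longrightarrow> dist (f a) (f b) < d/2"
    using unif[of "d/2"] d by auto
  define r where "r = min r0 (d/2)"
  have r: "r > 0" "r \<le> d/2" "r \<le> r0" using r0 d by (auto simp: r_def)
  obtain N where N: "\<forall>n\<ge>N. \<exists>w\<in>omg y. dist ((f^^n) y) w < r" using omg_near[OF y r(1)] by blast
  then obtain w where w: "\<And>n. n \<ge> N \<Longrightarrow> w n \<in> omg y \<and> dist ((f^^n) y) (w n) < r" by metis
  obtain n1 where n1: "n1 \<ge> N" "dist ((f^^n1) y) x < r" using x r unfolding omg_def by blast
  obtain n2 where n2: "n2 \<ge> n1 + 2" "dist ((f^^n2) y) x < r" using x r unfolding omg_def by blast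
  define L where "L = n2 - n1"
  define u where "u = (f^^n1) y"
  have uX: "u \<in> X" using funpow_X y u_def by blast
  have fu: "(f^^i) u = (f^^(i+n1)) y" for i by (simp add: u_def funpow_add)
  define c where "c i = (if i = 0 \<or> i = L then x else w (n1 + i))" for i
  have cw: "\<forall>i\<le>L. c i \<in> omg y \<and> dist (c i) ((f^^i) u) < r"
  proof (intro allI impI)
    fix i assume "i \<le> L"
    show "c i \<in> omg y \<and> dist (c i) ((f^^i) u) < r"
    proof (cases "i = 0 \<or> i = L")
      case True
      then show ?thesis using x n1 n2 fu[of i] by (auto simp: c_def L_def dist_commute u_def)
    next
      case False
      then show ?thesis using w[of "n1+i"] n1 fu[of i] by (auto simp: c_def dist_commute add.commute)
    qed
  qed
  have "\<forall>i<L. dist (f (c i)) (c (Suc i)) \<le> d"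
    by (rule trace[OF _ r(2) uX]) (use r0 r cw omg_X[OF y] in force)+
  then show ?thesis using cw n2(1) by (intro exI[of _ L] conjI exI[of _ c]) (auto simp: c_def L_def)
qed

end


lemma glue:
  fixes f :: "'a::metric_space \<Rightarrow> 'a"
  assumes L1: "\<forall>k. L k \<ge> (1::nat)" and BA: "\<forall>k j. j \<le> L k \<longrightarrow> B k j \<in> A"
    and err: "\<forall>k j. j < L k \<longrightarrow> dist (f (B k j)) (B k (Suc j)) \<le> e k"
    and con: "\<forall>k. B k (L k) = B (Suc k) 0" and e0: "e \<longlonglongrightarrow> 0"
  shows "\<exists>Z. limit_pseudo_orbit f A Z \<and> (\<forall>k j. j \<le> L k \<longrightarrow> Z ((\<Sum>i<k. L i) + j) = B k j)"
proof -
  define s where "s k = (\<Sum>i<k. L i)" for k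
  have sS: "s (Suc k) = s k + L k" for k by (simp add: s_def)
  have smono: "m \<le> n \<Longrightarrow> s m \<le> s n" for m n
    by (induction n) (auto simp: sS le_Suc_eq)
  have sk: "s k \<ge> k" for k
  proof (induction k)
    case 0 then show ?case by simp
  next
    case (Suc k) then show ?case using sS[of k] L1 by (metis add_mono plus_1_eq_Suc add.commute)
  qed
  define blk where "blk i = (LEAST k. i < s (Suc k))" for i
  have blk_eq: "blk (s k + j) = k" if "j < L k" for k j
    unfolding blk_def
  proof (rule Least_equality)
    show "s k + j < s (Suc k)" using that sS by simp
    fix y assume "s k + j < s (Suc y)"
    then show "k \<le> y"
    proof (rule contrapos_pp)
      assume "\<not> k \<le> y" then have "Suc y \<le> k" by simp
      then have "s (Suc y) \<le> s k" by (rule smono)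
      then show "\<not> s k + j < s (Suc y)" by simp
    qed
  qed
  have blk_ex: "\<exists>k j. i = s k + j \<and> j < L k" for i
  proof -
    have ex: "i < s (Suc (blk i))" unfolding blk_def
      by (rule LeastI[of _ i]) (use sk[of "Suc i"] in simp)
    have le: "s (blk i) \<le> i"
    proof (cases "blk i")
      case 0 then show ?thesis by (simp add: s_def)
    next
      case (Suc k)
      have "\<not> i < s (Suc k)" using not_less_Least[of k "\<lambda>k. i < s (Suc k)"] Suc unfolding blk_def by simp
      then show ?thesis using Suc by simp
    qed
    show ?thesis using ex le sS by (intro exI[of _ "blk i"] exI[of _ "i - s (blk i)"]) auto
  qed
  define Z where "Z i = B (blk i) (i - s (blk i))" for i
  have Zin: "Z (s k + j) = B k j" if "j < L k" for k j
    using blk_eq[OF that] by (simp add: Z_def)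
  have Zpos: "Z (s k + j) = B k j" if "j \<le> L k" for k j
  proof (cases "j < L k")
    case True then show ?thesis using Zin by blast
  next
    case False
    then have "j = L k" using that by simp
    then have "Z (s k + j) = Z (s (Suc k) + 0)" by (simp add: sS)
    also have "\<dots> = B (Suc k) 0" using L1 by (intro Zin) (metis less_le_trans zero_less_one)
    finally show ?thesis using con \<open>j = L k\<close> by simp
  qed
  have step: "dist (f (Z i)) (Z (Suc i)) \<le> e (blk i)" for i
  proof -
    obtain k j where kj: "i = s k + j" "j < L k" using blk_ex by blast
    have "Z i = B k j" "Z (Suc i) = B k (Suc j)" using Zpos kj by (auto simp del: add_Suc_right simp add: add_Suc_right[symmetric])
    moreover have "blk i = k" using blk_eq kj by simp
    ultimately show ?thesis using err kj by simp
  qed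
  have blk_ge: "blk i \<ge> K" if "i \<ge> s K" for i K
  proof -
    obtain k j where kj: "i = s k + j" "j < L k" using blk_ex by blast
    have "blk i = k" using blk_eq kj by simp
    moreover have "\<not> k < K"
    proof
      assume "k < K" then have "s (Suc k) \<le> s K" using smono by simp
      then show False using that kj sS by simp
    qed
    ultimately show ?thesis by simp
  qed
  have lim: "(\<lambda>i. dist (f (Z i)) (Z (Suc i))) \<longlonglongrightarrow> 0"
    unfolding lim_sequentially
  proof (intro allI impI)
    fix r :: real assume "r > 0"
    then obtain K where K: "\<forall>k\<ge>K. dist (e k) 0 < r" using e0 unfolding lim_sequentially by blast
    show "\<exists>no. \<forall>n\<ge>no. dist (dist (f (Z n)) (Z (Suc n))) 0 < r"
    proof (intro exI allI impI)
      fix n assume "s K \<le> n"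
      then have "dist (e (blk n)) 0 < r" using K blk_ge by blast
      then show "dist (dist (f (Z n)) (Z (Suc n))) 0 < r" using step[of n] by simp
    qed
  qed
  have "\<forall>i. Z i \<in> A"
  proof
    fix i obtain k j where kj: "i = s k + j" "j < L k" using blk_ex by blast
    then show "Z i \<in> A" using Zpos BA by simp
  qed
  then show ?thesis using lim Zpos unfolding limit_pseudo_orbit_def s_def by blast
qed



locale lsdyn = dyn +
  assumes ls: "limit_shadowing_property f X"
begin

lemma CR_omg: assumes x: "x \<in> chain_recurrent_set f X" shows "\<exists>y\<in>X. x \<in> omg y"
proof -
  have xX: "x \<in> X" using x by (simp add: chain_recurrent_set_def)
  have "\<forall>k. \<exists>L\<ge>1. \<exists>c. c 0 = x \<and> c L = x \<and> (\<forall>i\<le>L. c i \<in> X) \<and> (\<forall>i<L. dist (f (c i)) (c (Suc i)) \<le> inverse (real (Suc k)))"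
    using x unfolding chain_recurrent_set_def by auto
  then obtain L B where LB: "\<And>k. L k \<ge> 1" "\<And>k. B k 0 = x" "\<And>k. B k (L k) = x"
    "\<And>k. \<forall>i\<le>L k. B k i \<in> X" "\<And>k. \<forall>i<L k. dist (f (B k i)) (B k (Suc i)) \<le> inverse (real (Suc k))"
    by metis
  obtain Z where Z: "limit_pseudo_orbit f X Z" "\<forall>k j. j \<le> L k \<longrightarrow> Z ((\<Sum>i<k. L i) + j) = B k j"
    using glue[of L B X f "\<lambda>k. inverse (real (Suc k))"] LB LIMSEQ_inverse_real_of_nat by auto
  obtain y where y: "y \<in> X" "(\<lambda>i. dist (Z i) ((f^^i) y)) \<longlonglongrightarrow> 0"
    using ls Z(1) unfolding limit_shadowing_property_def by blast
  have sk: "(\<Sum>i<k. L i) \<ge> k" for k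
  proof -
    have "(\<Sum>i<k. (1::nat)) \<le> (\<Sum>i<k. L i)" by (rule sum_mono) (use LB in auto)
    then show ?thesis by simp
  qed
  have "x \<in> omg y" unfolding omg_def
  proof (intro CollectI allI impI)
    fix r :: real and N assume r: "r > 0"
    then obtain I where I: "\<forall>i\<ge>I. dist (dist (Z i) ((f^^i) y)) 0 < r" using y(2) unfolding lim_sequentially by blast
    define n where "n = (\<Sum>i<N+I. L i)"
    have n: "n \<ge> N" "n \<ge> I" using sk[of "N+I"] by (auto simp: n_def)
    have "Z n = x" using Z(2) LB(2)[of "N+I"] by (metis n_def add.right_neutral le0)
    then show "\<exists>n\<ge>N. dist ((f ^^ n) y) x < r" using I n by (intro exI[of _ n]) (auto simp: dist_commute)
  qed
  then show ?thesis using y by blast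
qed

lemma CR_sub_omega: "chain_recurrent_set f X \<subseteq> \<Omega>"
  using CR_omg omg_omega by blast

lemma omega_cycle:
  assumes a: "a \<in> \<Omega>" and d: "d > 0"
  shows "\<exists>L\<ge>2. \<exists>c. c 0 = a \<and> c L = a \<and> (\<forall>i\<le>L. c i \<in> \<Omega>) \<and> (\<forall>i<L. dist (f (c i)) (c (Suc i)) \<le> d)"
proof -
  obtain y where y: "y \<in> X" "a \<in> omg y" using CR_omg omega_sub_CR a by blast
  then show ?thesis using omg_cycle[OF y d] omg_omega[OF y(1)] by blast
qed

lemma concat_chain:
  assumes "c1 L1 = c2 0" "\<forall>i\<le>L1. c1 i \<in> S" "\<forall>i\<le>L2. c2 i \<in> S"
    "\<forall>i<L1. dist (f (c1 i)) (c1 (Suc i)) \<le> e" "\<forall>i<L2. dist (f (c2 i)) (c2 (Suc i)) \<le> e"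
  defines "c \<equiv> (\<lambda>i. if i \<le> L1 then c1 i else c2 (i - L1))"
  shows "c 0 = c1 0 \<and> c (L1 + L2) = c2 L2 \<and> (\<forall>i\<le>L1. c i = c1 i) \<and> (\<forall>i\<le>L1+L2. c i \<in> S) \<and>
    (\<forall>i<L1+L2. dist (f (c i)) (c (Suc i)) \<le> e)"
proof (intro conjI allI impI)
  show "c (L1 + L2) = c2 L2" using assms(1) by (auto simp: c_def)
  fix i assume i: "i < L1 + L2"
  show "dist (f (c i)) (c (Suc i)) \<le> e"
  proof (cases "i < L1")
    case True then show ?thesis using assms(4) by (auto simp: c_def)
  next
    case False
    then have "c i = c2 (i - L1)" "c (Suc i) = c2 (Suc (i - L1))" using assms(1) by (auto simp: c_def Suc_diff_le)
    then show ?thesis using assms(5) i False by simp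
  qed
qed (use assms in \<open>auto simp: c_def\<close>)

lemma back1:
  assumes eta: "eta > 0"
  shows "\<exists>d>0. \<forall>a b. a \<in> \<Omega> \<and> b \<in> \<Omega> \<and> dist (f a) b \<le> d \<longrightarrow>
     (\<exists>L\<ge>1. \<exists>c. c 0 = b \<and> c L = a \<and> (\<forall>i\<le>L. c i \<in> \<Omega>) \<and> (\<forall>i<L. dist (f (c i)) (c (Suc i)) \<le> eta))"
proof -
  obtain rho where rho: "rho > 0" "\<forall>p\<in>X. \<forall>q\<in>X. dist p q < rho \<longrightarrow> dist (f p) (f q) < eta/2"
    using unif[of "eta/2"] eta by auto
  show ?thesis
  proof (intro exI[of _ "rho/3"] conjI allI impI)
    show "rho/3 > 0" using rho by simp
    fix a b assume ab: "a \<in> \<Omega> \<and> b \<in> \<Omega> \<and> dist (f a) b \<le> rho/3"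
    obtain L c where c: "L \<ge> 2" "c 0 = a" "c L = a" "\<forall>i\<le>L. c i \<in> \<Omega>"
      "\<forall>i<L. dist (f (c i)) (c (Suc i)) \<le> min (rho/3) (eta/2)"
      using omega_cycle[of a "min (rho/3) (eta/2)"] ab rho eta by auto
    define e where "e i = (if i = 0 then b else c (Suc i))" for i
    have "dist (f (c 0)) (c 1) \<le> rho/3" using c(1,5) by fastforce
    then have "dist (f a) (c 1) \<le> rho/3" using c(2) by simp
    then have "dist b (c 1) < rho" using ab rho(1) dist_triangle[of b "c 1" "f a"] dist_commute[of b "f a"] by linarith
    moreover have "b \<in> X" "c 1 \<in> X" using ab c(1,4) omega_X by auto
    ultimately have "dist (f b) (f (c 1)) < eta/2" using rho by blast
    moreover have "dist (f (c 1)) (c 2) \<le> eta/2" using c(1,5) by (metis Suc_1 lessI min.bounded_iff less_le_trans)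
    ultimately have s0: "dist (f (e 0)) (e 1) \<le> eta" using dist_triangle[of "f b" "c 2" "f (c 1)"]
      by (simp add: e_def numeral_2_eq_2)
    show "\<exists>L\<ge>1. \<exists>c. c 0 = b \<and> c L = a \<and> (\<forall>i\<le>L. c i \<in> \<Omega>) \<and> (\<forall>i<L. dist (f (c i)) (c (Suc i)) \<le> eta)"
    proof (intro exI[of _ "L - 1"] exI[of _ e] conjI allI impI)
      show "1 \<le> L - 1" using c(1) by simp
      show "e 0 = b" by (simp add: e_def)
      show "e (L - 1) = a" using c(1,3) by (simp add: e_def)
      fix i
      show "i \<le> L - 1 \<Longrightarrow> e i \<in> \<Omega>" using c(4) ab by (auto simp: e_def)
      assume i: "i < L - 1"
      show "dist (f (e i)) (e (Suc i)) \<le> eta"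
      proof (cases "i = 0")
        case True then show ?thesis using s0 by simp
      next
        case False
        then have "dist (f (c (Suc i))) (c (Suc (Suc i))) \<le> min (rho/3) (eta/2)" using c(5) i by simp
        then show ?thesis using False eta by (simp add: e_def)
      qed
    qed
  qed
qed

end


context lsdyn begin

lemma prefix_cycle:
  assumes bk: "\<forall>a b. a \<in> \<Omega> \<and> b \<in> \<Omega> \<and> dist (f a) b \<le> d \<longrightarrow>
     (\<exists>L\<ge>1. \<exists>c. c 0 = b \<and> c L = a \<and> (\<forall>i\<le>L. c i \<in> \<Omega>) \<and> (\<forall>i<L. dist (f (c i)) (c (Suc i)) \<le> eta))"
    and eta: "eta > 0" "d \<le> eta"
    and xi: "\<forall>i. xi i \<in> \<Omega>" "\<forall>i. dist (f (xi i)) (xi (Suc i)) \<le> d"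
  shows "\<exists>P>N. \<exists>C. (\<forall>j\<le>N. C j = xi j) \<and> C P = xi 0 \<and> (\<forall>j\<le>P. C j \<in> \<Omega>) \<and> (\<forall>j<P. dist (f (C j)) (C (Suc j)) \<le> eta)"
proof -
  have bc: "\<exists>L\<ge>1. \<exists>c. c 0 = xi n \<and> c L = xi 0 \<and> (\<forall>i\<le>L. c i \<in> \<Omega>) \<and> (\<forall>i<L. dist (f (c i)) (c (Suc i)) \<le> eta)" for n
  proof (induction n)
    case 0
    then show ?case using omega_cycle[OF xi(1)[rule_format, of 0] eta(1)]
      by (metis one_le_numeral order_trans)
  next
    case (Suc n)
    obtain L2 c2 where c2: "L2 \<ge> 1" "c2 0 = xi n" "c2 L2 = xi 0" "\<forall>i\<le>L2. c2 i \<in> \<Omega>" "\<forall>i<L2. dist (f (c2 i)) (c2 (Suc i)) \<le> eta"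
      using Suc by blast
    obtain L1 c1 where c1: "L1 \<ge> 1" "c1 0 = xi (Suc n)" "c1 L1 = xi n" "\<forall>i\<le>L1. c1 i \<in> \<Omega>" "\<forall>i<L1. dist (f (c1 i)) (c1 (Suc i)) \<le> eta"
      using bk xi by blast
    show ?case
      using concat_chain[of c1 L1 c2 \<Omega> L2 eta] c1 c2
      by (intro exI[of _ "L1+L2"] conjI exI[of _ "\<lambda>i. if i \<le> L1 then c1 i else c2 (i - L1)"]) auto
  qed
  obtain L2 c2 where c2: "L2 \<ge> 1" "c2 0 = xi N" "c2 L2 = xi 0" "\<forall>i\<le>L2. c2 i \<in> \<Omega>" "\<forall>i<L2. dist (f (c2 i)) (c2 (Suc i)) \<le> eta"
    using bc by blast
  have x1: "\<forall>i\<le>N. xi i \<in> \<Omega>" "\<forall>i<N. dist (f (xi i)) (xi (Suc i)) \<le> eta" using xi eta by (auto intro: order_trans)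
  show ?thesis
    using concat_chain[of xi N c2 \<Omega> L2 eta] c2 x1
    by (intro exI[of _ "N+L2"] conjI exI[of _ "\<lambda>i. if i \<le> N then xi i else c2 (i - N)"]) auto
qed

lemma periodic:
  assumes "P \<ge> (1::nat)" "C 0 = C P" "\<forall>j\<le>P. C j \<in> S" "\<forall>j<P. dist (f (C j)) (C (Suc j)) \<le> e"
  shows "pseudo_orbit f S e (\<lambda>i. C (i mod P))"
  unfolding pseudo_orbit_def
proof (intro conjI allI)
  fix i
  have lt: "i mod P < P" using assms(1) by simp
  then show "C (i mod P) \<in> S" using assms(3) by simp
  have "C (Suc i mod P) = C (Suc (i mod P))" using assms(2) by (simp add: mod_Suc)
  then show "dist (f (C (i mod P))) (C (Suc i mod P)) \<le> e" using assms(4) lt by simp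
qed

lemma le_lim: assumes "g \<longlonglongrightarrow> l" "eventually (\<lambda>n. dist a (g n) \<le> e) sequentially" shows "dist a l \<le> e"
proof -
  have "(\<lambda>n. dist a (g n)) \<longlonglongrightarrow> dist a l" by (intro tendsto_intros assms(1))
  then show ?thesis using assms(2) by (rule tendsto_upperbound) simp
qed

lemma CL:
  assumes K: "compact K" "K \<subseteq> X" and h: "\<forall>N. \<exists>w\<in>K. \<forall>j\<le>N. dist (xi j) ((f^^j) w) \<le> e"
  shows "\<exists>w\<in>K. \<forall>j. dist (xi j) ((f^^j) w) \<le> e"
proof -
  obtain w where w: "\<And>N. w N \<in> K \<and> (\<forall>j\<le>N. dist (xi j) ((f^^j) (w N)) \<le> e)" using h by metis
  obtain z r where zr: "z \<in> K" "strict_mono r" "(w \<circ> r) \<longlonglongrightarrow> z"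
    using seq_compactE[OF compact_imp_seq_compact[OF K(1)], of w] w by blast
  have "dist (xi j) ((f^^j) z) \<le> e" for j
  proof (rule le_lim)
    show "(\<lambda>m. (f^^j) ((w \<circ> r) m)) \<longlonglongrightarrow> (f^^j) z"
      by (rule continuous_on_tendsto_compose[OF cont_funpow zr(3)]) (use zr(1) K(2) w in \<open>auto intro!: always_eventually\<close>)
    show "\<forall>\<^sub>F m in sequentially. dist (xi j) ((f ^^ j) ((w \<circ> r) m)) \<le> e"
      unfolding eventually_sequentially
    proof (intro exI[of _ j] allI impI)
      fix n assume "j \<le> n"
      then have "j \<le> r n" using seq_suble[OF zr(2), of n] by linarith
      then show "dist (xi j) ((f ^^ j) ((w \<circ> r) n)) \<le> e" using w[of "r n"] by simp
    qed
  qed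
  then show ?thesis using zr(1) by blast
qed

end


context lsdyn begin

lemma Pfin:
  assumes eps: "eps > 0"
  shows "\<exists>d>0. \<forall>xi. pseudo_orbit f \<Omega> d xi \<longrightarrow> (\<forall>N. \<exists>w\<in>X. \<forall>j\<le>N. dist (xi j) ((f^^j) w) \<le> eps)"
proof (rule ccontr)
  assume neg: "\<not> ?thesis"
  define eta where "eta n = inverse (real (Suc n))" for n
  have eta0: "eta n > 0" for n by (simp add: eta_def)
  have "\<forall>n. \<exists>xi N P C. (\<forall>w\<in>X. \<exists>j\<le>N. dist (xi j) ((f^^j) w) > eps) \<and> P > N \<and> (\<forall>j\<le>N. C j = xi j)
     \<and> C P = xi 0 \<and> (\<forall>j\<le>P. C j \<in> \<Omega>) \<and> (\<forall>j<P. dist (f (C j)) (C (Suc j)) \<le> eta n)"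
  proof
    fix n
    obtain dd where dd: "dd > 0" "\<forall>a b. a \<in> \<Omega> \<and> b \<in> \<Omega> \<and> dist (f a) b \<le> dd \<longrightarrow>
     (\<exists>L\<ge>1. \<exists>c. c 0 = b \<and> c L = a \<and> (\<forall>i\<le>L. c i \<in> \<Omega>) \<and> (\<forall>i<L. dist (f (c i)) (c (Suc i)) \<le> eta n))"
      using back1[OF eta0[of n]] by blast
    define d where "d = min dd (eta n)"
    have d: "d > 0" using dd eta0 by (simp add: d_def)
    obtain xi N where xi: "pseudo_orbit f \<Omega> d xi" "\<forall>w\<in>X. \<exists>j\<le>N. dist (xi j) ((f^^j) w) > eps"
      using neg d by (auto simp: not_le)
    have bk: "\<forall>a b. a \<in> \<Omega> \<and> b \<in> \<Omega> \<and> dist (f a) b \<le> d \<longrightarrow>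
     (\<exists>L\<ge>1. \<exists>c. c 0 = b \<and> c L = a \<and> (\<forall>i\<le>L. c i \<in> \<Omega>) \<and> (\<forall>i<L. dist (f (c i)) (c (Suc i)) \<le> eta n))"
      using dd(2) by (auto simp: d_def)
    obtain P C where PC: "P > N" "\<forall>j\<le>N. C j = xi j" "C P = xi 0" "\<forall>j\<le>P. C j \<in> \<Omega>" "\<forall>j<P. dist (f (C j)) (C (Suc j)) \<le> eta n"
      using prefix_cycle[OF bk eta0[of n], of xi N] xi(1) by (auto simp: pseudo_orbit_def d_def)
    show "\<exists>xi N P C. (\<forall>w\<in>X. \<exists>j\<le>N. dist (xi j) ((f^^j) w) > eps) \<and> P > N \<and> (\<forall>j\<le>N. C j = xi j)
     \<and> C P = xi 0 \<and> (\<forall>j\<le>P. C j \<in> \<Omega>) \<and> (\<forall>j<P. dist (f (C j)) (C (Suc j)) \<le> eta n)"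
      using xi(2) PC by blast
  qed
  then obtain xi N P C where H: "\<And>n. (\<forall>w\<in>X. \<exists>j\<le>N n. dist (xi n j) ((f^^j) w) > eps) \<and> P n > N n \<and> (\<forall>j\<le>N n. C n j = xi n j)
     \<and> C n (P n) = xi n 0 \<and> (\<forall>j\<le>P n. C n j \<in> \<Omega>) \<and> (\<forall>j<P n. dist (f (C n j)) (C n (Suc j)) \<le> eta n)"
    by metis
  have C0: "C n 0 = xi n 0" for n using H[of n] by blast
  have xi0X: "xi n 0 \<in> X" for n using H[of n] C0[of n] omega_X by (metis le0 subsetD)
  obtain p r where pr: "p \<in> X" "strict_mono r" "((\<lambda>n. xi n 0) \<circ> r) \<longlonglongrightarrow> p"
    using seq_compactE[OF seqc, of "\<lambda>n. xi n 0"] H omega_X C0 by (metis le0 subsetD)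
  define B where "B k j = (if j = P (r k) then C (r (Suc k)) 0 else C (r k) j)" for k j
  define L where "L k = P (r k)" for k
  define e where "e k = eta (r k) + dist (xi (r k) 0) (xi (r (Suc k)) 0)" for k
  have L1: "\<forall>k. L k \<ge> 1" using H by (metis L_def less_one not_le not_less0)
  have BA: "\<forall>k j. j \<le> L k \<longrightarrow> B k j \<in> X"
    using H omega_X xi0X C0 by (auto simp: B_def L_def)
  have err: "\<forall>k j. j < L k \<longrightarrow> dist (f (B k j)) (B k (Suc j)) \<le> e k"
  proof (intro allI impI)
    fix k j assume j: "j < L k"
    have dC: "dist (f (C (r k) j)) (C (r k) (Suc j)) \<le> eta (r k)" using H[of "r k"] j by (auto simp: L_def)
    show "dist (f (B k j)) (B k (Suc j)) \<le> e k"
    proof (cases "Suc j = L k")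
      case True
      then have "B k (Suc j) = xi (r (Suc k)) 0" "B k j = C (r k) j" "C (r k) (Suc j) = xi (r k) 0"
        using H[of "r k"] C0 by (auto simp: B_def L_def)
      then show ?thesis using dC dist_triangle[of "f (C (r k) j)" "xi (r (Suc k)) 0" "xi (r k) 0"]
        by (simp add: e_def)
    next
      case False
      then have "B k (Suc j) = C (r k) (Suc j)" "B k j = C (r k) j" using j by (auto simp: B_def L_def)
      then have "dist (f (B k j)) (B k (Suc j)) = dist (f (C (r k) j)) (C (r k) (Suc j))" by simp
      moreover have "0 \<le> dist (xi (r k) 0) (xi (r (Suc k)) 0)" by simp
      ultimately show ?thesis using dC unfolding e_def by linarith
    qed
  qed
  have con: "\<forall>k. B k (L k) = B (Suc k) 0" using H by (auto simp: B_def L_def) (metis not_less0)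
  have e0: "e \<longlonglongrightarrow> 0"
  proof -
    have a: "(\<lambda>k. eta (r k)) \<longlonglongrightarrow> 0"
      using LIMSEQ_subseq_LIMSEQ[OF LIMSEQ_inverse_real_of_nat pr(2)] by (simp add: eta_def o_def)
    have b1: "(\<lambda>k. xi (r k) 0) \<longlonglongrightarrow> p" using pr(3) by (simp add: o_def)
    have b2: "(\<lambda>k. xi (r (Suc k)) 0) \<longlonglongrightarrow> p" using LIMSEQ_Suc[OF b1] by simp
    have "(\<lambda>k. dist (xi (r k) 0) (xi (r (Suc k)) 0)) \<longlonglongrightarrow> dist p p" by (rule tendsto_dist[OF b1 b2])
    then show ?thesis using tendsto_add[OF a] unfolding e_def by fastforce
  qed
  obtain Z where Z: "limit_pseudo_orbit f X Z" "\<forall>k j. j \<le> L k \<longrightarrow> Z ((\<Sum>i<k. L i) + j) = B k j"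
    using glue[OF L1 BA err con e0] by blast
  obtain y where y: "y \<in> X" "(\<lambda>i. dist (Z i) ((f^^i) y)) \<longlonglongrightarrow> 0"
    using ls Z(1) unfolding limit_shadowing_property_def by blast
  obtain I where I: "\<forall>i\<ge>I. dist (dist (Z i) ((f^^i) y)) 0 < eps" using y(2) eps unfolding lim_sequentially by blast
  define s where "s = (\<Sum>i<I. L i)"
  have sI: "s \<ge> I"
  proof -
    have "(\<Sum>i<I. (1::nat)) \<le> (\<Sum>i<I. L i)" by (rule sum_mono) (use L1 in auto)
    then show ?thesis by (simp add: s_def)
  qed
  define w where "w = (f^^s) y"
  have wX: "w \<in> X" using funpow_X y(1) w_def by blast
  have "\<forall>j\<le>N (r I). dist (xi (r I) j) ((f^^j) w) \<le> eps"
  proof (intro allI impI)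
    fix j assume j: "j \<le> N (r I)"
    then have jP: "j < P (r I)" using H[of "r I"] by simp
    have "Z (s + j) = xi (r I) j" using Z(2) jP H[of "r I"] j by (auto simp: B_def L_def s_def)
    moreover have "(f^^j) w = (f^^(s+j)) y" by (simp add: w_def funpow_add add.commute)
    moreover have "dist (Z (s+j)) ((f^^(s+j)) y) < eps" using I sI by fastforce
    ultimately show "dist (xi (r I) j) ((f^^j) w) \<le> eps" by simp
  qed
  then show False using H[of "r I"] wX by (meson not_le)
qed

end


lemma subset_chain_iff: "subset.chain A C \<longleftrightarrow> C \<subseteq> A \<and> (\<forall>x\<in>C. \<forall>y\<in>C. x \<subseteq> y \<or> y \<subseteq> x)"
  unfolding pred_on.chain_def by (auto simp: psubset_eq)

lemma minimal_exists:
  fixes f :: "'a::metric_space \<Rightarrow> 'a"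
  assumes S: "compact S" "S \<noteq> {}" "f ` S \<subseteq> S"
  shows "\<exists>M0. M0 \<subseteq> S \<and> M0 \<noteq> {} \<and> closed M0 \<and> f ` M0 \<subseteq> M0 \<and>
     (\<forall>Z. Z \<subseteq> M0 \<and> Z \<noteq> {} \<and> closed Z \<and> f ` Z \<subseteq> Z \<longrightarrow> Z = M0)"
proof -
  define F where "F = {Z. Z \<subseteq> S \<and> Z \<noteq> {} \<and> closed Z \<and> f ` Z \<subseteq> Z}"
  define A where "A = (\<lambda>Z. S - Z) ` F"
  have Sc: "closed S" using S compact_imp_closed by blast
  have "\<exists>M\<in>A. \<forall>Y\<in>A. M \<subseteq> Y \<longrightarrow> Y = M"
  proof (rule subset_Zorn')
    fix C assume C: "subset.chain A C"
    have CA: "C \<subseteq> A" and Cc: "\<forall>x\<in>C. \<forall>y\<in>C. x \<subseteq> y \<or> y \<subseteq> x" using C unfolding subset_chain_iff by auto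
    define D where "D = (\<lambda>c. S - c) ` C"
    have DF: "D \<subseteq> F"
    proof
      fix d assume "d \<in> D"
      then obtain c where c: "c \<in> C" "d = S - c" by (auto simp: D_def)
      then obtain Z where Z: "Z \<in> F" "c = S - Z" using CA by (auto simp: A_def)
      then have "Z \<subseteq> S" by (simp add: F_def)
      then have "d = Z" using c Z by blast
      then show "d \<in> F" using Z by simp
    qed
    have Dch: "subset.chain F D"
      unfolding subset_chain_iff
    proof (intro conjI DF ballI)
      fix x y assume "x \<in> D" "y \<in> D"
      then obtain c1 c2 where "c1 \<in> C" "c2 \<in> C" "x = S - c1" "y = S - c2" by (auto simp: D_def)
      then show "x \<subseteq> y \<or> y \<subseteq> x" using Cc by blast
    qed
    define W where "W = S \<inter> \<Inter>D"
    have "S \<inter> \<Inter>D \<noteq> {}"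
    proof (rule compact_imp_fip[OF S(1)])
      fix T assume "T \<in> D" then have "T \<in> F" using DF by blast
      then show "closed T" by (simp add: F_def)
    next
      fix F' assume F': "finite F'" "F' \<subseteq> D"
      show "S \<inter> \<Inter>F' \<noteq> {}"
      proof (cases "F' = {}")
        case True then show ?thesis using S(2) by simp
      next
        case False
        have Dc: "\<forall>x\<in>D. \<forall>y\<in>D. x \<subseteq> y \<or> y \<subseteq> x" using Dch unfolding subset_chain_iff by (rule conjunct2)
        have ch: "subset.chain F F'" unfolding subset_chain_iff
        proof (intro conjI ballI)
          show "F' \<subseteq> F" using F'(2) DF by (rule order_trans)
          fix x y assume "x \<in> F'" "y \<in> F'"
          then have "x \<in> D" "y \<in> D" using F'(2) by (auto dest: subsetD)
          then show "x \<subseteq> y \<or> y \<subseteq> x" using Dc by blast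
        qed
        have "\<Inter>F' \<in> F'" by (rule Inter_in_chain[OF F'(1) False ch])
        then have "\<Inter>F' \<in> F" using F'(2) DF by blast
        then have "\<Inter>F' \<subseteq> S" "\<Inter>F' \<noteq> {}" by (simp_all add: F_def)
        then show ?thesis by blast
      qed
    qed
    then have Wne: "W \<noteq> {}" by (simp add: W_def)
    have Wc: "closed W" unfolding W_def
    proof (intro closed_Int Sc closed_Inter ballI)
      fix T assume "T \<in> D" then show "closed T" using DF by (auto simp: F_def)
    qed
    have Wi: "f ` W \<subseteq> W"
    proof
      fix z assume "z \<in> f ` W"
      then obtain w where w: "w \<in> W" "z = f w" by blast
      have "z \<in> S" using w S(3) by (auto simp: W_def)
      moreover have "z \<in> T" if "T \<in> D" for T
      proof -
        have "f ` T \<subseteq> T" using that DF by (auto simp: F_def)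
        moreover have "w \<in> T" using w that by (auto simp: W_def)
        ultimately show ?thesis using w by blast
      qed
      ultimately show "z \<in> W" by (auto simp: W_def)
    qed
    have WS: "W \<subseteq> S" by (auto simp: W_def)
    have WF: "W \<in> F" unfolding F_def using Wne Wc Wi WS by blast
    have CS: "c \<subseteq> S" if "c \<in> C" for c using that CA by (auto simp: A_def)
    have "\<Union>C = S - W"
    proof
      show "\<Union>C \<subseteq> S - W"
      proof
        fix z assume "z \<in> \<Union>C"
        then obtain c where c: "c \<in> C" "z \<in> c" by blast
        then have "z \<in> S" using CS by blast
        moreover have "S - c \<in> D" using c by (simp add: D_def)
        ultimately show "z \<in> S - W" using c by (auto simp: W_def)
      qed
      show "S - W \<subseteq> \<Union>C"
      proof
        fix z assume "z \<in> S - W"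
        then obtain T where T: "T \<in> D" "z \<notin> T" "z \<in> S" by (auto simp: W_def)
        then obtain c where "c \<in> C" "T = S - c" by (auto simp: D_def)
        then show "z \<in> \<Union>C" using T by blast
      qed
    qed
    then show "\<Union>C \<in> A" using WF unfolding A_def by blast
  qed
  then obtain M0 where M0: "M0 \<in> F" "\<forall>Y\<in>A. S - M0 \<subseteq> Y \<longrightarrow> Y = S - M0" by (auto simp: A_def)
  have M0F: "M0 \<subseteq> S" "M0 \<noteq> {}" "closed M0" "f ` M0 \<subseteq> M0" using M0(1) by (simp_all add: F_def)
  show ?thesis
  proof (intro exI[of _ M0] conjI allI impI M0F)
    fix Z assume Z: "Z \<subseteq> M0 \<and> Z \<noteq> {} \<and> closed Z \<and> f ` Z \<subseteq> Z"
    then have ZF: "Z \<in> F" using M0F(1) unfolding F_def by blast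
    then have "S - Z \<in> A" unfolding A_def by blast
    moreover have "S - M0 \<subseteq> S - Z" using Z by blast
    ultimately have "S - Z = S - M0" using M0(2) by blast
    then show "Z = M0" using Z M0F(1) by blast
  qed
qed



context lsdyn begin

lemma shad: "shadowing_property f \<Omega>"
  unfolding shadowing_property_def
proof (intro allI impI)
  fix eps :: real assume eps: "eps > 0"
  obtain d0 where d0: "d0 > 0" "\<forall>xi. pseudo_orbit f \<Omega> d0 xi \<longrightarrow> (\<forall>N. \<exists>w\<in>X. \<forall>j\<le>N. dist (xi j) ((f^^j) w) \<le> eps/2)"
    using Pfin[of "eps/2"] eps by auto
  obtain d1 where d1: "d1 > 0" "\<forall>a b. a \<in> \<Omega> \<and> b \<in> \<Omega> \<and> dist (f a) b \<le> d1 \<longrightarrow>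
     (\<exists>L\<ge>1. \<exists>c. c 0 = b \<and> c L = a \<and> (\<forall>i\<le>L. c i \<in> \<Omega>) \<and> (\<forall>i<L. dist (f (c i)) (c (Suc i)) \<le> d0))"
    using back1[OF d0(1)] by blast
  define d where "d = min d0 d1"
  have bk: "\<forall>a b. a \<in> \<Omega> \<and> b \<in> \<Omega> \<and> dist (f a) b \<le> d \<longrightarrow>
     (\<exists>L\<ge>1. \<exists>c. c 0 = b \<and> c L = a \<and> (\<forall>i\<le>L. c i \<in> \<Omega>) \<and> (\<forall>i<L. dist (f (c i)) (c (Suc i)) \<le> d0))"
    using d1(2) by (auto simp: d_def)
  show "\<exists>d>0. \<forall>xs. pseudo_orbit f \<Omega> d xs \<longrightarrow> (\<exists>x\<in>\<Omega>. shadows f eps xs x)"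
  proof (intro exI[of _ d] conjI allI impI)
    show "d > 0" using d0 d1 by (simp add: d_def)
    fix xi assume xi: "pseudo_orbit f \<Omega> d xi"
    have pre: "\<exists>z\<in>\<Omega>. \<forall>j\<le>N. dist (xi j) ((f^^j) z) \<le> eps/2" for N
    proof -
      obtain P C where PC: "P > N" "\<forall>j\<le>N. C j = xi j" "C P = xi 0" "\<forall>j\<le>P. C j \<in> \<Omega>"
        "\<forall>j<P. dist (f (C j)) (C (Suc j)) \<le> d0"
        using prefix_cycle[OF bk d0(1), of xi N] xi by (auto simp: pseudo_orbit_def d_def)
      define Q where "Q i = C (i mod P)" for i
      have P1: "P \<ge> 1" using PC by simp
      have "pseudo_orbit f \<Omega> d0 Q" unfolding Q_def
        by (rule periodic[OF P1]) (use PC in auto)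
      then have "\<forall>M. \<exists>w\<in>X. \<forall>j\<le>M. dist (Q j) ((f^^j) w) \<le> eps/2" using d0 by blast
      then obtain w where w: "w \<in> X" "\<forall>j. dist (Q j) ((f^^j) w) \<le> eps/2"
        using CL[OF cX order_refl] by blast
      obtain z r where zr: "z \<in> X" "strict_mono r" "((\<lambda>m. (f^^(m*P)) w) \<circ> r) \<longlonglongrightarrow> z"
        using seq_compactE[OF seqc, of "\<lambda>m. (f^^(m*P)) w"] funpow_X[OF w(1)] by blast
      have conv: "(\<lambda>m. (f^^(r m * P)) w) \<longlonglongrightarrow> z" using zr(3) by (simp add: o_def)
      have "z \<in> omg w" unfolding omg_def
      proof (intro CollectI allI impI)
        fix rr :: real and N' assume "rr > 0"
        then obtain M where M: "\<forall>m\<ge>M. dist ((f^^(r m * P)) w) z < rr" using conv unfolding lim_sequentially by blast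
        have "r (M + N') * P \<ge> N'" using seq_suble[OF zr(2), of "M+N'"] P1
          by (metis le_add2 mult_le_mono nat_mult_1_right order_trans)
        then show "\<exists>n\<ge>N'. dist ((f ^^ n) w) z < rr" using M by (meson le_add1)
      qed
      then have zO: "z \<in> \<Omega>" using omg_omega[OF w(1)] by blast
      have "dist (Q j) ((f^^j) z) \<le> eps/2" for j
      proof (rule le_lim)
        show "(\<lambda>m. (f^^j) ((f^^(r m * P)) w)) \<longlonglongrightarrow> (f^^j) z"
          by (rule continuous_on_tendsto_compose[OF cont_funpow conv zr(1)])
             (use funpow_X[OF w(1)] in \<open>auto intro!: always_eventually\<close>)
        show "\<forall>\<^sub>F m in sequentially. dist (Q j) ((f ^^ j) ((f ^^ (r m * P)) w)) \<le> eps / 2"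
        proof (intro always_eventually allI)
          fix m
          have "Q (j + r m * P) = Q j" by (simp add: Q_def)
          moreover have "(f ^^ j) ((f ^^ (r m * P)) w) = (f^^(j + r m * P)) w" by (simp add: funpow_add)
          ultimately show "dist (Q j) ((f ^^ j) ((f ^^ (r m * P)) w)) \<le> eps / 2" using w(2)[rule_format, of "j + r m * P"] by simp
        qed
      qed
      moreover have "Q j = xi j" if "j \<le> N" for j using that PC by (simp add: Q_def)
      ultimately show ?thesis using zO by (intro bexI[of _ z]) (metis)
    qed
    obtain z where z: "z \<in> \<Omega>" "\<forall>j. dist (xi j) ((f^^j) z) \<le> eps/2"
      using CL[OF omega_compact omega_X, of xi "eps/2"] pre by blast
    then show "\<exists>x\<in>\<Omega>. shadows f eps xi x" unfolding shadows_def using eps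
    proof (intro bexI[of _ z] allI)
      fix i show "dist (xi i) ((f ^^ i) z) \<le> eps" using z(2)[rule_format, of i] eps by linarith
    qed (rule z(1))
  qed
qed

end


lemma inv_funpow: "f ` M \<subseteq> M \<Longrightarrow> (f^^n) ` M \<subseteq> M"
  by (induction n) auto

context lsdyn begin

lemma omega_sub_minimal: "\<Omega> \<subseteq> closure (minimal_points f X)"
proof
  fix x assume x: "x \<in> \<Omega>"
  show "x \<in> closure (minimal_points f X)" unfolding closure_approachable
  proof (intro allI impI)
    fix e :: real assume e: "e > 0"
    obtain d where d: "d > 0" "\<forall>xs. pseudo_orbit f \<Omega> d xs \<longrightarrow> (\<exists>x\<in>\<Omega>. shadows f (e/2) xs x)"
      using shad e unfolding shadowing_property_def by (meson half_gt_zero)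
    obtain L c where c: "L \<ge> 2" "c 0 = x" "c L = x" "\<forall>i\<le>L. c i \<in> \<Omega>" "\<forall>i<L. dist (f (c i)) (c (Suc i)) \<le> d"
      using omega_cycle[OF x d(1)] by blast
    have L1: "L \<ge> 1" using c by simp
    have "pseudo_orbit f \<Omega> d (\<lambda>i. c (i mod L))" by (rule periodic[OF L1]) (use c in auto)
    then obtain y where y: "y \<in> \<Omega>" "\<forall>i. dist (c (i mod L)) ((f^^i) y) \<le> e/2"
      using d(2) unfolding shadows_def by blast
    have yX: "y \<in> X" using y omega_X by blast
    define Orb where "Orb = {(f^^(i*L)) y | i. True}"
    define K where "K = closure Orb"
    have OrbX: "Orb \<subseteq> X" using funpow_X[OF yX] by (auto simp: Orb_def)
    have KX: "K \<subseteq> X" unfolding K_def using OrbX closedX closure_minimal by blast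
    have Kc: "compact K" unfolding K_def using KX cX compact_Int_closed[of X K] closed_closure
      by (metis K_def inf.absorb_iff2)
    have Kne: "K \<noteq> {}" unfolding K_def Orb_def by auto
    have OB: "Orb \<subseteq> cball x (e/2)"
    proof
      fix p assume "p \<in> Orb"
      then obtain i where p: "p = (f^^(i*L)) y" by (auto simp: Orb_def)
      have "dist (c ((i*L) mod L)) p \<le> e/2" using y(2)[rule_format, of "i*L"] p by blast
      then show "p \<in> cball x (e/2)" using c(2) by simp
    qed
    then have KB: "K \<subseteq> cball x (e/2)" unfolding K_def by (simp add: closure_minimal)
    have OI: "(f^^L) ` Orb \<subseteq> Orb"
    proof
      fix p assume "p \<in> (f^^L) ` Orb"
      then obtain i where "p = (f^^L) ((f^^(i*L)) y)" by (auto simp: Orb_def)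
      then have "p = (f^^(L + i * L)) y" by (simp add: funpow_add)
      then have "p = (f^^(Suc i * L)) y" by simp
      then show "p \<in> Orb" unfolding Orb_def by blast
    qed
    have KI: "(f^^L) ` K \<subseteq> K" unfolding K_def
    proof (rule image_closure_subset)
      show "continuous_on (closure Orb) (f ^^ L)" using continuous_on_subset[OF cont_funpow] KX K_def by blast
      show "(f ^^ L) ` Orb \<subseteq> closure Orb" using OI closure_subset by blast
    qed simp
    define S where "S = (\<Union>j<L. (f^^j) ` K)"
    have SX: "S \<subseteq> X" unfolding S_def using KX funpow_X by auto
    have Sc: "compact S" unfolding S_def
      by (rule compact_UN) (use Kc continuous_on_subset[OF cont_funpow KX] in \<open>auto intro: compact_continuous_image\<close>)
    have "0 \<in> {..<L}" using L1 by simp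
    then have "(f^^0) ` K \<subseteq> S" unfolding S_def by blast
    then have Sne: "S \<noteq> {}" using Kne by auto
    have SI: "f ` S \<subseteq> S"
    proof
      fix p assume "p \<in> f ` S"
      then obtain j k where jk: "j < L" "k \<in> K" "p = f ((f^^j) k)" by (auto simp: S_def)
      then have p: "p = (f^^Suc j) k" by simp
      show "p \<in> S"
      proof (cases "Suc j < L")
        case True
        have "p \<in> (f^^Suc j) ` K" using p jk by blast
        then show ?thesis using True unfolding S_def by blast
      next
        case False
        then have "Suc j = L" using jk by simp
        then have "p = (f^^L) k" using p by simp
        then have "p \<in> K" using KI jk(2) by blast
        then have "p \<in> (f^^0) ` K" by simp
        moreover have "0 \<in> {..<L}" using L1 by simp
        ultimately show ?thesis unfolding S_def by blast
      qed
    qed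
    obtain M0 where M0: "M0 \<subseteq> S" "M0 \<noteq> {}" "closed M0" "f ` M0 \<subseteq> M0"
      "\<forall>Z. Z \<subseteq> M0 \<and> Z \<noteq> {} \<and> closed Z \<and> f ` Z \<subseteq> Z \<longrightarrow> Z = M0"
      using minimal_exists[OF Sc Sne SI] by blast
    obtain z where z: "z \<in> M0" using M0 by blast
    then obtain j k where jk: "j < L" "k \<in> K" "z = (f^^j) k" using M0(1) by (auto simp: S_def)
    define w where "w = (f^^(L-j)) z"
    have "(f^^((L-j) + j)) k = (f^^(L-j)) ((f^^j) k)" by (simp only: funpow_add o_apply)
    moreover have "(L-j) + j = L" using jk by simp
    ultimately have "w = (f^^L) k" using jk by (simp add: w_def)
    then have wK: "w \<in> K" using KI jk(2) by blast
    have wM: "w \<in> M0" using inv_funpow[OF M0(4), of "L-j"] z unfolding w_def by blast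
    have wX: "w \<in> X" using wK KX by blast
    define Oc where "Oc = orbit_closure f w"
    have orbM: "{(f^^n) w | n. True} \<subseteq> M0"
    proof
      fix q assume "q \<in> {(f^^n) w | n. True}"
      then obtain n where "q = (f^^n) w" by blast
      then show "q \<in> M0" using inv_funpow[OF M0(4), of n] wM by blast
    qed
    have OcM: "Oc \<subseteq> M0" unfolding Oc_def orbit_closure_def using orbM M0(3) closure_minimal by blast
    have Ocne: "Oc \<noteq> {}" unfolding Oc_def orbit_closure_def by auto
    have OcI: "f ` Oc \<subseteq> Oc" unfolding Oc_def orbit_closure_def
      using closure_inv[OF orbit_X[OF wX] orbit_inv] .
    have Occ: "closed Oc" by (simp add: Oc_def orbit_closure_def)
    have OcM0: "Oc = M0" using M0(5) OcM Ocne OcI Occ by blast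
    have "minimal_system f Oc" unfolding minimal_system_def
    proof (intro conjI Ocne Occ OcI allI impI)
      fix Z assume "Z \<subseteq> Oc \<and> Z \<noteq> {} \<and> closed Z \<and> f ` Z \<subseteq> Z"
      then show "Z = Oc" using M0(5) OcM0 by blast
    qed
    then have "w \<in> minimal_points f X" using wX by (simp add: minimal_points_def Oc_def)
    moreover have "dist w x < e" using wK KB e by (auto simp: dist_commute)
    ultimately show "\<exists>y\<in>minimal_points f X. dist y x < e" by blast
  qed
qed

end

theorem theorem1p1:
  fixes f :: "'a::metric_space \<Rightarrow> 'a" and X :: "'a set"
  assumes "compact X"
    and "continuous_on X f"
    and "f ` X \<subseteq> X"
    and "limit_shadowing_property f X"
  shows "chain_recurrent_set f X = nonwandering_set f X
     \<and> nonwandering_set f X = closure (minimal_points f X)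
     \<and> shadowing_property f (nonwandering_set f X)"
proof -
  interpret lsdyn f X using assms by unfold_locales
  have 1: "chain_recurrent_set f X = nonwandering_set f X"
    using omega_sub_CR CR_sub_omega by (rule subset_antisym[rotated])
  have 2: "nonwandering_set f X = closure (minimal_points f X)"
    using omega_sub_minimal closure_sub_omega[OF minimal_sub_omega] by (rule subset_antisym)
  show ?thesis using 1 2 shad by blast
qed


end
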